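(* Let $G$ be a finitely generated group, $H\le G$ a subgroup, and $\Omega\le\operatorname{Aut}(G)$ such that $\phi(H)=H$ for all $\phi\in\Omega$. Let $P=\{\phi|_H:\phi\in\Omega\}\le\operatorname{Aut}(H)$. Then $\alpha_{H^P\subseteq G}\preccurlyeq\alpha_{G^\Omega}$.
   Context: Fix a finite generating set $\Sigma$ of $G$ and the word length $|\cdot|_\Sigma$. For $\Omega\le\operatorname{Aut}(G)$, the $\Omega$-automorphic growth function sends $n$ to the number of $\Omega$-orbits of $G$ containing an element of length at most $n$; $\alpha_{G^\Omega}$ is its $\sim$-class. For a subset $U\subseteq G$ and a group $P$ of permutations of $U$, the relative $P$-automorphic growth $\alpha_{U^P\subseteq G}$ is the $\sim$-class of the function sending $n$ to the number of $P$-orbits of $U$ containing an element $u$ with $|u|_\Sigma\le n$ (word length measured in $G$). For non-decreasing non-zero $f,g\colon\mathbb{N}\to\mathbb{N}$, $f\preccurlyeq g$ means there is $\lambda\in\mathbb{N}\setminus\{0\}$ with $f(n)\le\lambda g(\lambda n+\lambda)+\lambda$ for all $n$, and $f\sim g$ means $f\preccurlyeq g$ and $g\preccurlyeq f$. These classes do not depend on $\Sigma$. *)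

theory Defs
  imports "HOL-Algebra.Algebra"
begin

definition word_length :: "('a, 'b) monoid_scheme \<Rightarrow> 'a set \<Rightarrow> 'a \<Rightarrow> nat" where
  "word_length G S x =
     (LEAST n. \<exists>ws. length ws = n \<and> set ws \<subseteq> S \<union> m_inv G ` S
                 \<and> foldr (\<lambda>a b. a \<otimes>\<^bsub>G\<^esub> b) ws \<one>\<^bsub>G\<^esub> = x)"

definition orbit_of :: "('a \<Rightarrow> 'a) set \<Rightarrow> 'a \<Rightarrow> 'a set" where
  "orbit_of P u = (\<lambda>p. p u) ` P"

definition rel_aut_growth ::
  "('a, 'b) monoid_scheme \<Rightarrow> 'a set \<Rightarrow> 'a set \<Rightarrow> ('a \<Rightarrow> 'a) set \<Rightarrow> nat \<Rightarrow> nat" where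
  "rel_aut_growth G S U P n =
     card {Orb \<in> orbit_of P ` U. \<exists>u\<in>Orb. word_length G S u \<le> n}"

definition aut_growth ::
  "('a, 'b) monoid_scheme \<Rightarrow> 'a set \<Rightarrow> ('a \<Rightarrow> 'a) set \<Rightarrow> nat \<Rightarrow> nat" where
  "aut_growth G S \<Omega> n =
     card {Orb \<in> orbit_of \<Omega> ` carrier G. \<exists>u\<in>Orb. word_length G S u \<le> n}"

definition growth_le :: "(nat \<Rightarrow> nat) \<Rightarrow> (nat \<Rightarrow> nat) \<Rightarrow> bool" where
  "growth_le f g \<longleftrightarrow> (\<exists>c::nat. c \<noteq> 0 \<and> (\<forall>n. f n \<le> c * g (c * n + c) + c))"

end

theory Submission
  imports Defs
begin

lemma foldr_carrier: assumes "group G" "set ws \<subseteq> carrier G"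
  shows "foldr (\<lambda>a b. a \<otimes>\<^bsub>G\<^esub> b) ws \<one>\<^bsub>G\<^esub> \<in> carrier G"
  using assms by (induction ws) (auto intro: group.is_monoid monoid.m_closed)

lemma foldr_append: assumes "group G" "set ws \<subseteq> carrier G" "set vs \<subseteq> carrier G"
  shows "foldr (\<lambda>a b. a \<otimes>\<^bsub>G\<^esub> b) (ws @ vs) \<one>\<^bsub>G\<^esub> =
     foldr (\<lambda>a b. a \<otimes>\<^bsub>G\<^esub> b) ws \<one>\<^bsub>G\<^esub> \<otimes>\<^bsub>G\<^esub> foldr (\<lambda>a b. a \<otimes>\<^bsub>G\<^esub> b) vs \<one>\<^bsub>G\<^esub>"
  using assms
proof (induction ws)
  case Nil
  then show ?case using foldr_carrier[OF assms(1,3)] by (simp add: group.is_monoid monoid.l_one)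
next
  case (Cons a ws)
  then show ?case using foldr_carrier[OF assms(1,3)] foldr_carrier[OF assms(1), of ws]
    by (simp add: group.is_monoid monoid.m_assoc)
qed

lemma gen_word: assumes "group G" "S \<subseteq> carrier G" "x \<in> generate G S"
  shows "\<exists>ws. set ws \<subseteq> S \<union> m_inv G ` S \<and> foldr (\<lambda>a b. a \<otimes>\<^bsub>G\<^esub> b) ws \<one>\<^bsub>G\<^esub> = x"
  using assms(3)
proof (induction rule: generate.induct)
  case one
  then show ?case by (rule exI[of _ "[]"]) simp
next
  case (incl h)
  then show ?case using assms by (intro exI[of _ "[h]"]) (auto simp: group.is_monoid monoid.r_one)
next
  case (inv h)
  then show ?case using assms by (intro exI[of _ "[m_inv G h]"]) (auto simp: group.is_monoid monoid.r_one group.inv_closed)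
next
  case (eng h1 h2)
  then obtain w1 w2 where w: "set w1 \<subseteq> S \<union> m_inv G ` S" "foldr (\<lambda>a b. a \<otimes>\<^bsub>G\<^esub> b) w1 \<one>\<^bsub>G\<^esub> = h1"
    "set w2 \<subseteq> S \<union> m_inv G ` S" "foldr (\<lambda>a b. a \<otimes>\<^bsub>G\<^esub> b) w2 \<one>\<^bsub>G\<^esub> = h2" by blast
  have "S \<union> m_inv G ` S \<subseteq> carrier G" using assms by (auto simp: group.inv_closed)
  then have c: "set w1 \<subseteq> carrier G" "set w2 \<subseteq> carrier G" using w(1,3) by blast+
  show ?case using w foldr_append[OF assms(1) c] by (intro exI[of _ "w1 @ w2"]) auto
qed

lemma ball_finite: assumes "group G" "finite S" "S \<subseteq> carrier G" "generate G S = carrier G"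
  shows "finite {u \<in> carrier G. word_length G S u \<le> n}"
proof -
  let ?A = "S \<union> m_inv G ` S"
  let ?f = "\<lambda>ws. foldr (\<lambda>a b. a \<otimes>\<^bsub>G\<^esub> b) ws \<one>\<^bsub>G\<^esub>"
  have "{u \<in> carrier G. word_length G S u \<le> n} \<subseteq> ?f ` {ws. set ws \<subseteq> ?A \<and> length ws \<le> n}"
  proof
    fix u assume u: "u \<in> {u \<in> carrier G. word_length G S u \<le> n}"
    then obtain ws where ws: "set ws \<subseteq> ?A" "?f ws = u" using gen_word[OF assms(1,3)] assms(4) by blast
    have "\<exists>ws. length ws = word_length G S u \<and> set ws \<subseteq> ?A \<and> ?f ws = u"
      unfolding word_length_def by (rule LeastI[of _ "length ws"]) (use ws in auto)
    then show "u \<in> ?f ` {ws. set ws \<subseteq> ?A \<and> length ws \<le> n}" using u by auto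
  qed
  moreover have "finite {ws. set ws \<subseteq> ?A \<and> length ws \<le> n}"
    using finite_lists_length_le[of ?A n] assms(2) by simp
  ultimately show ?thesis by (meson finite_surj)
qed

lemma orbit_eq: assumes "group G" "subgroup \<Omega> (AutoGroup G)" "\<phi> \<in> \<Omega>" "v \<in> carrier G"
  shows "orbit_of \<Omega> (\<phi> v) = orbit_of \<Omega> v"
proof -
  interpret A: group "AutoGroup G" using group.AutoGroup[OF assms(1)] .
  have mult: "\<And>a b x. a \<in> \<Omega> \<Longrightarrow> b \<in> \<Omega> \<Longrightarrow> x \<in> carrier G \<Longrightarrow> (a \<otimes>\<^bsub>AutoGroup G\<^esub> b) x = a (b x)"
  proof -
    fix a b x assume "a \<in> \<Omega>" "b \<in> \<Omega>" "x \<in> carrier G"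
    then have "a \<in> auto G" "b \<in> auto G" using subgroup.subset[OF assms(2)] by (auto simp: AutoGroup_def)
    then show "(a \<otimes>\<^bsub>AutoGroup G\<^esub> b) x = a (b x)" using \<open>x \<in> carrier G\<close>
      by (auto simp: AutoGroup_def BijGroup_def auto_def compose_def)
  qed
  have one: "\<And>x. x \<in> carrier G \<Longrightarrow> \<one>\<^bsub>AutoGroup G\<^esub> x = x"
    by (simp add: AutoGroup_def BijGroup_def)
  have phiv: "\<phi> v \<in> carrier G" using assms subgroup.subset[OF assms(2)]
    by (auto simp: AutoGroup_def auto_def hom_def)
  show ?thesis
  proof
    show "orbit_of \<Omega> (\<phi> v) \<subseteq> orbit_of \<Omega> v"
    proof
      fix y assume "y \<in> orbit_of \<Omega> (\<phi> v)"
      then obtain \<psi> where p: "\<psi> \<in> \<Omega>" "y = \<psi> (\<phi> v)" by (auto simp: orbit_of_def)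
      then have "y = (\<psi> \<otimes>\<^bsub>AutoGroup G\<^esub> \<phi>) v" using mult[OF p(1) assms(3,4)] by simp
      moreover have "\<psi> \<otimes>\<^bsub>AutoGroup G\<^esub> \<phi> \<in> \<Omega>" using subgroup.m_closed[OF assms(2) p(1) assms(3)] .
      ultimately show "y \<in> orbit_of \<Omega> v" by (auto simp: orbit_of_def)
    qed
    show "orbit_of \<Omega> v \<subseteq> orbit_of \<Omega> (\<phi> v)"
    proof
      fix y assume "y \<in> orbit_of \<Omega> v"
      then obtain \<psi> where p: "\<psi> \<in> \<Omega>" "y = \<psi> v" by (auto simp: orbit_of_def)
      let ?i = "inv\<^bsub>AutoGroup G\<^esub> \<phi>"
      have i: "?i \<in> \<Omega>" using subgroup.m_inv_closed[OF assms(2,3)] .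
      have "(?i \<otimes>\<^bsub>AutoGroup G\<^esub> \<phi>) = \<one>\<^bsub>AutoGroup G\<^esub>"
        using assms(3) subgroup.subset[OF assms(2)] by (intro A.l_inv) auto
      then have "?i (\<phi> v) = v" using mult[OF i assms(3,4)] one[OF assms(4)] by simp
      then have "y = (\<psi> \<otimes>\<^bsub>AutoGroup G\<^esub> ?i) (\<phi> v)" using mult[OF p(1) i phiv] p by simp
      moreover have "\<psi> \<otimes>\<^bsub>AutoGroup G\<^esub> ?i \<in> \<Omega>" using subgroup.m_closed[OF assms(2) p(1) i] .
      ultimately show "y \<in> orbit_of \<Omega> (\<phi> v)" by (auto simp: orbit_of_def)
    qed
  qed
qed

theorem mainTheorem14:
  fixes G :: "('a, 'b) monoid_scheme" and \<Sigma> H :: "'a set" and \<Omega> :: "('a \<Rightarrow> 'a) set"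
  assumes "group G"
    and "finite \<Sigma>" and "\<Sigma> \<subseteq> carrier G" and "generate G \<Sigma> = carrier G"
    and "subgroup H G"
    and "subgroup \<Omega> (AutoGroup G)"
    and "\<forall>\<phi>\<in>\<Omega>. \<phi> ` H = H"
  shows "growth_le (rel_aut_growth G \<Sigma> H ((\<lambda>\<phi>. restrict \<phi> H) ` \<Omega>)) (aut_growth G \<Sigma> \<Omega>)"
proof -
  have Hc: "H \<subseteq> carrier G" using assms(5) subgroup.subset by blast
  have orbH: "orbit_of ((\<lambda>\<phi>. restrict \<phi> H) ` \<Omega>) u = orbit_of \<Omega> u" if "u \<in> H" for u
    using that unfolding orbit_of_def image_image by simp
  define Aset where "Aset n = {Orb \<in> orbit_of \<Omega> ` carrier G. \<exists>u\<in>Orb. word_length G \<Sigma> u \<le> n}" for n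
  have finA: "finite (Aset n)" for n
  proof -
    have "Aset n \<subseteq> orbit_of \<Omega> ` {u \<in> carrier G. word_length G \<Sigma> u \<le> n}"
    proof
      fix Orb assume "Orb \<in> Aset n"
      then obtain v u where v: "v \<in> carrier G" "Orb = orbit_of \<Omega> v" "u \<in> Orb" "word_length G \<Sigma> u \<le> n"
        unfolding Aset_def by blast
      then obtain \<phi> where p: "\<phi> \<in> \<Omega>" "u = \<phi> v" by (auto simp: orbit_of_def)
      have "u \<in> carrier G" using p v(1) subgroup.subset[OF assms(6)]
        by (auto simp: AutoGroup_def auto_def hom_def)
      moreover have "Orb = orbit_of \<Omega> u" using orbit_eq[OF assms(1,6) p(1) v(1)] p v by simp
      ultimately show "Orb \<in> orbit_of \<Omega> ` {u \<in> carrier G. word_length G \<Sigma> u \<le> n}" using v by blast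
    qed
    then show ?thesis by (rule finite_surj[OF ball_finite[OF assms(1-4), of n]])
  qed
  have "rel_aut_growth G \<Sigma> H ((\<lambda>\<phi>. restrict \<phi> H) ` \<Omega>) n \<le> 1 * aut_growth G \<Sigma> \<Omega> (1 * n + 1) + 1" for n
  proof -
    have sub: "{Orb \<in> orbit_of ((\<lambda>\<phi>. restrict \<phi> H) ` \<Omega>) ` H. \<exists>u\<in>Orb. word_length G \<Sigma> u \<le> n} \<subseteq> Aset (n+1)"
    proof
      fix Orb assume "Orb \<in> {Orb \<in> orbit_of ((\<lambda>\<phi>. restrict \<phi> H) ` \<Omega>) ` H. \<exists>u\<in>Orb. word_length G \<Sigma> u \<le> n}"
      then obtain v u where v: "v \<in> H" "Orb = orbit_of ((\<lambda>\<phi>. restrict \<phi> H) ` \<Omega>) v" "u \<in> Orb" "word_length G \<Sigma> u \<le> n"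
        by blast
      then have "Orb = orbit_of \<Omega> v" using orbH by simp
      moreover have "v \<in> carrier G" using v(1) Hc by blast
      moreover have "word_length G \<Sigma> u \<le> n + 1" using v(4) by simp
      ultimately show "Orb \<in> Aset (n+1)" unfolding Aset_def using v(3) by blast
    qed
    have "rel_aut_growth G \<Sigma> H ((\<lambda>\<phi>. restrict \<phi> H) ` \<Omega>) n \<le> card (Aset (n+1))"
      unfolding rel_aut_growth_def using card_mono[OF finA sub] .
    then show ?thesis unfolding aut_growth_def Aset_def by simp
  qed
  then show ?thesis unfolding growth_le_def by (intro exI[of _ 1]) simp
qed

end
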